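(* For $0<\varepsilon\le1$, $$\tfrac12\varepsilon^2\inf_g\|g*g\|_\infty\le \tfrac12\varepsilon^2\inf_f\|f*f\|_\infty=\Delta(\varepsilon),$$ where the first infimum is over all pdfs $g$ supported on $[-\tfrac14,\tfrac14]$, and the second infimum is over all nifs $f$ whose support is a subset of $[-\tfrac14,\tfrac14]$ of measure $\varepsilon/2$.
   Context: $\mathbb{T}=\mathbb{R}/\mathbb{Z}$ with Lebesgue measure $\lambda$; integrals are over $\mathbb{T}$, $f*g(c)=\int_{\mathbb{T}} f(x)g(c-x)\,dx$, and $\|h\|_\infty$ is the essential supremum of $|h|$. Subsets of $[-\tfrac14,\tfrac14]$ are regarded as subsets of $\mathbb{T}$. A pdf is a nonnegative function in $L^2(\mathbb{T})$ with $\int_{\mathbb{T}} f=1$. An nif is a pdf of the form $f_E=\lambda(E)^{-1}\mathbf{1}_E$ for a measurable $E\subseteq\mathbb{T}$ with $\lambda(E)>0$. A set $C\subseteq\mathbb{R}$ is symmetric if there is $c$ with $c+x\in C\iff c-x\in C$; $D(A):=\sup\{\lambda(C): C\subseteq A \text{ symmetric}\}$ and $\Delta(\varepsilon):=\inf\{D(A): A\subseteq[0,1) \text{ measurable},\ \lambda(A)=\varepsilon\}$. *)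

theory Defs
  imports "HOL-Analysis.Analysis" "HOL-Probability.Essential_Supremum"
begin

text \<open>The circle T = R/Z is modelled by 1-periodic functions on the reals;
  integration over T is integration over [0,1] w.r.t. Lebesgue measure.\<close>

definition periodic1 :: "(real \<Rightarrow> real) \<Rightarrow> bool" where
  "periodic1 f \<longleftrightarrow> (\<forall>x. f (x + 1) = f x)"

definition pdf :: "(real \<Rightarrow> real) \<Rightarrow> bool" where
  "pdf f \<longleftrightarrow> periodic1 f \<and> (\<forall>x. 0 \<le> f x)
     \<and> f \<in> borel_measurable (lebesgue_on {0..1})
     \<and> integrable (lebesgue_on {0..1}) (\<lambda>x. (f x)^2)
     \<and> integral\<^sup>L (lebesgue_on {0..1}) f = 1"

definition conv :: "(real \<Rightarrow> real) \<Rightarrow> (real \<Rightarrow> real) \<Rightarrow> real \<Rightarrow> real" where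
  "conv f g c = integral\<^sup>L (lebesgue_on {0..1}) (\<lambda>x. f x * g (c - x))"

definition supnorm :: "(real \<Rightarrow> real) \<Rightarrow> ereal" where
  "supnorm h = esssup (lebesgue_on {0..1}) (\<lambda>x. ereal \<bar>h x\<bar>)"

text \<open>Image in T of a set of reals (used for subsets of [-1/4,1/4]).\<close>
definition torus_set :: "real set \<Rightarrow> real set" where
  "torus_set E = {x. \<exists>k::int. x + of_int k \<in> E}"

definition nif_of :: "real set \<Rightarrow> real \<Rightarrow> real" where
  "nif_of E x = (if x \<in> torus_set E then 1 / measure lebesgue E else 0)"

definition symmetric_set :: "real set \<Rightarrow> bool" where
  "symmetric_set C \<longleftrightarrow> (\<exists>c. \<forall>x. c + x \<in> C \<longleftrightarrow> c - x \<in> C)"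

definition D :: "real set \<Rightarrow> real" where
  "D A = Sup {measure lebesgue C | C. C \<in> sets lebesgue \<and> C \<subseteq> A \<and> symmetric_set C}"

definition Delta :: "real \<Rightarrow> real" where
  "Delta \<epsilon> = Inf {D A | A. A \<subseteq> {0..<1} \<and> A \<in> sets lebesgue \<and> measure lebesgue A = \<epsilon>}"

end

theory Submission
  imports Defs
begin

lemma aff_measurable: "(b::real) \<noteq> 0 \<Longrightarrow> (\<lambda>x. a + b*x) \<in> lebesgue \<rightarrow>\<^sub>M lebesgue"
  using lebesgue_affine_measurable[of "\<lambda>_. b" a] by simp

lemma aff_sets:
  assumes "E \<in> sets lebesgue" "(b::real) \<noteq> 0"
  shows "{x. a + b*x \<in> E} \<in> sets lebesgue"
proof -
  have "{x. a + b*x \<in> E} = (\<lambda>x. a + b*x) -` E \<inter> space lebesgue" by auto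
  then show ?thesis using measurable_sets[OF aff_measurable[OF assms(2)] assms(1)] by simp
qed

lemma aff_image:
  assumes "(b::real) \<noteq> 0"
  shows "{x. a + b*x \<in> E} = (\<lambda>y. (1/b) *\<^sub>R y + (-a/b)) ` E"
proof (rule set_eqI, rule iffI)
  fix x assume "x \<in> {x. a + b*x \<in> E}"
  then show "x \<in> (\<lambda>y. (1/b) *\<^sub>R y + (-a/b)) ` E"
    by (intro image_eqI[where x="a+b*x"]) (use assms in \<open>auto simp: field_simps\<close>)
next
  fix x assume "x \<in> (\<lambda>y. (1/b) *\<^sub>R y + (-a/b)) ` E"
  then show "x \<in> {x. a + b*x \<in> E}" using assms by (auto simp: field_simps)
qed

lemma aff_measure:
  assumes "(b::real) \<noteq> 0"
  shows "measure lebesgue {x. a + b*x \<in> E} = measure lebesgue E / \<bar>b\<bar>"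
  using measure_lebesgue_affine[of "1/b" "-a/b" E] aff_image[OF assms, of a E] by simp

lemma aff_lmeasurable:
  assumes "E \<in> lmeasurable" "(b::real) \<noteq> 0"
  shows "{x. a + b*x \<in> E} \<in> lmeasurable"
proof -
  have "emeasure lebesgue {x. a + b*x \<in> E} = ennreal \<bar>1/b\<bar> * emeasure lebesgue E"
    using emeasure_lebesgue_affine[of "1/b" "-a/b" E] aff_image[OF assms(2), of a E] by simp
  also have "\<dots> < \<infinity>"
  proof -
    have "emeasure lebesgue E < \<infinity>" using assms(1) unfolding fmeasurable_def by blast
    then show ?thesis by (metis ennreal_less_top ennreal_mult_less_top infinity_ennreal_def)
  qed
  finally show ?thesis using aff_sets[OF _ assms(2), of E a] assms(1)
    by (auto simp: fmeasurable_def)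
qed

lemma singleton_sub_measure: "S \<subseteq> {a::real} \<Longrightarrow> measure lebesgue S = 0"
  using subset_singletonD[of S a] by auto

lemma transl_small:
  fixes A :: "real set"
  assumes A: "A \<in> sets lebesgue" "bounded A" and d: "\<delta> > 0"
  obtains r where "r > 0" "\<And>t. \<bar>t\<bar> < r \<Longrightarrow> measure lebesgue {x\<in>A. x - t \<notin> A} < \<delta>"
proof -
  obtain T where T: "closed T" "T \<subseteq> A" "A - T \<in> lmeasurable" "emeasure lebesgue (A - T) < ennreal (\<delta>/2)"
    using sets_lebesgue_inner_closed[OF A(1), of "\<delta>/2"] d by auto
  obtain U where U: "open U" "A \<subseteq> U" "U - A \<in> lmeasurable" "emeasure lebesgue (U - A) < ennreal (\<delta>/2)"
    using sets_lebesgue_outer_open[OF A(1), of "\<delta>/2"] d by auto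
  have "compact T" using T A(2) by (meson bounded_subset compact_eq_bounded_closed)
  then obtain r where r: "r > 0" "(\<Union>x\<in>T. ball x r) \<subseteq> U"
    using compact_subset_open_imp_ball_epsilon_subset[of T U] T(2) U(1,2) by blast
  have m1: "measure lebesgue (A - T) < \<delta>/2"
    using T(3,4) d by (simp add: emeasure_eq_measure2 ennreal_less_iff)
  have m2: "measure lebesgue (U - A) < \<delta>/2"
    using U(3,4) d by (simp add: emeasure_eq_measure2 ennreal_less_iff)
  show thesis
  proof (rule that[OF r(1)])
    fix t :: real assume t: "\<bar>t\<bar> < r"
    have sub: "{x\<in>A. x - t \<notin> A} \<subseteq> (A - T) \<union> ((+) t ` (U - A))"
    proof
      fix x assume x: "x \<in> {x\<in>A. x - t \<notin> A}"
      show "x \<in> (A - T) \<union> ((+) t ` (U - A))"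
      proof (cases "x \<in> T")
        case True
        then have "x - t \<in> ball x r" using t by (simp add: dist_real_def)
        then have "x - t \<in> U" using r(2) True by blast
        then show ?thesis using x by (intro UnI2 image_eqI[where x="x-t"]) auto
      qed (use x in auto)
    qed
    have L1: "(+) t ` (U - A) \<in> lmeasurable" using U(3) by (rule measurable_translation)
    have "{x\<in>A. x - t \<notin> A} = A - {x. (-t) + 1*x \<in> A}" by auto
    then have S: "{x\<in>A. x - t \<notin> A} \<in> sets lebesgue" using aff_sets[OF A(1), of 1 "-t"] A(1) by auto
    have "measure lebesgue {x\<in>A. x - t \<notin> A} \<le> measure lebesgue ((A - T) \<union> ((+) t ` (U - A)))"
      by (rule measure_mono_fmeasurable[OF sub S]) (use T(3) L1 in auto)
    also have "\<dots> \<le> measure lebesgue (A - T) + measure lebesgue ((+) t ` (U - A))"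
      using T(3) L1 by (intro measure_subadditive) (auto simp: fmeasurable_def)
    also have "\<dots> < \<delta>" using m1 m2 by (simp add: measure_translation)
    finally show "measure lebesgue {x\<in>A. x - t \<notin> A} < \<delta>" .
  qed
qed

definition PP :: "real set \<Rightarrow> real \<Rightarrow> real" where
  "PP A d = measure lebesgue {x\<in>A. d - x \<in> A}"

lemma PP_set_eq: "{x\<in>A. d - x \<in> A} = A \<inter> {x. d + (-1)*x \<in> A}" for d :: real by auto

lemma PP_sets: "A \<in> sets lebesgue \<Longrightarrow> {x\<in>A. d - x \<in> A} \<in> sets lebesgue" for A :: "real set"
  unfolding PP_set_eq using aff_sets[of A "-1" d] by auto

lemma PP_nonneg: "0 \<le> PP A d" unfolding PP_def by simp

lemma PP_le: "A \<in> lmeasurable \<Longrightarrow> PP A d \<le> measure lebesgue A"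
  unfolding PP_def by (rule measure_mono_fmeasurable) (auto intro: PP_sets)

lemma lm_subadd: "A \<in> fmeasurable M \<Longrightarrow> B \<in> fmeasurable M \<Longrightarrow> measure M (A \<union> B) \<le> measure M A + measure M B"
  by (intro measure_subadditive) (auto simp: fmeasurable_def)

lemma PP_diff:
  fixes A :: "real set"
  assumes A: "A \<in> lmeasurable"
  shows "PP A d0 \<le> PP A d + measure lebesgue {z\<in>A. z - (d0 - d) \<notin> A}"
proof -
  let ?Q = "{z\<in>A. z - (d0 - d) \<notin> A}"
  have Qs: "?Q \<in> lmeasurable"
  proof -
    have "?Q = A - {x. (d-d0) + 1*x \<in> A}" by (auto simp: algebra_simps)
    then have Qm: "?Q \<in> sets lebesgue" using aff_sets[of A 1 "d-d0"] A by auto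
    show ?thesis by (rule fmeasurableI2[OF A _ Qm]) auto
  qed
  have R: "{x. d0 + (-1)*x \<in> ?Q} \<in> lmeasurable" by (rule aff_lmeasurable[OF Qs]) (rule neg_one_neq_zero)
  have Rm: "measure lebesgue {x. d0 + (-1)*x \<in> ?Q} = measure lebesgue ?Q"
  proof -
    have h: "(-1::real) \<noteq> 0" by simp
    have h2: "\<bar>-1::real\<bar> = 1" by simp
    show ?thesis using aff_measure[OF h, of d0 ?Q] unfolding h2 div_by_1 .
  qed
  have S1: "{x\<in>A. d - x \<in> A} \<in> lmeasurable"
    by (rule fmeasurableI2[OF A _ PP_sets[OF fmeasurableD[OF A]]]) blast
  have sub: "{x\<in>A. d0 - x \<in> A} \<subseteq> {x\<in>A. d - x \<in> A} \<union> {x. d0 + (-1)*x \<in> ?Q}"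
  proof
    fix x assume x: "x \<in> {x\<in>A. d0 - x \<in> A}"
    have e: "d0 - x - (d0 - d) = d - x" by simp
    show "x \<in> {x\<in>A. d - x \<in> A} \<union> {x. d0 + (-1)*x \<in> ?Q}"
      using x e by (cases "d - x \<in> A") auto
  qed
  have "PP A d0 \<le> measure lebesgue ({x\<in>A. d - x \<in> A} \<union> {x. d0 + (-1)*x \<in> ?Q})"
    unfolding PP_def by (rule measure_mono_fmeasurable[OF sub PP_sets[OF fmeasurableD[OF A]] fmeasurable.Un[OF S1 R]])
  also have "\<dots> \<le> PP A d + measure lebesgue {x. d0 + (-1)*x \<in> ?Q}"
    unfolding PP_def by (rule lm_subadd[OF S1 R])
  also have "\<dots> = PP A d + measure lebesgue ?Q" by (simp only: Rm)
  finally show ?thesis .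
qed

lemma PP_cont:
  fixes A :: "real set"
  assumes A: "A \<in> sets lebesgue" "bounded A"
  shows "isCont (PP A) d0"
proof -
  have Al: "A \<in> lmeasurable" using A by (simp add: bounded_set_imp_lmeasurable)
  show ?thesis unfolding isCont_def LIM_eq
  proof (intro allI impI)
    fix \<delta> :: real assume d: "\<delta> > 0"
    obtain r where r: "r > 0" "\<And>t. \<bar>t\<bar> < r \<Longrightarrow> measure lebesgue {x\<in>A. x - t \<notin> A} < \<delta>"
      using transl_small[OF A d] by blast
    show "\<exists>s>0. \<forall>x. x \<noteq> d0 \<and> norm (x - d0) < s \<longrightarrow> norm (PP A x - PP A d0) < \<delta>"
    proof (intro exI[of _ r] conjI allI impI)
      fix x assume "x \<noteq> d0 \<and> norm (x - d0) < r"
      then have x: "\<bar>x - d0\<bar> < r" "\<bar>d0 - x\<bar> < r" by (simp_all add: abs_minus_commute)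
      have "PP A d0 \<le> PP A x + measure lebesgue {z\<in>A. z - (d0 - x) \<notin> A}" by (rule PP_diff[OF Al])
      moreover have "PP A x \<le> PP A d0 + measure lebesgue {z\<in>A. z - (x - d0) \<notin> A}" by (rule PP_diff[OF Al])
      moreover note r(2)[OF x(1)] r(2)[OF x(2)]
      ultimately show "norm (PP A x - PP A d0) < \<delta>" unfolding real_norm_def abs_less_iff
        by (intro conjI; linarith)
    qed (use r in auto)
  qed
qed

lemma PP_cont_on: "A \<in> sets lebesgue \<Longrightarrow> bounded A \<Longrightarrow> continuous_on S (PP A)"
  by (simp add: PP_cont continuous_at_imp_continuous_on)

definition MM :: "real set \<Rightarrow> real" where
  "MM A = Sup (range (PP A))"

lemma MM_bdd: "A \<in> lmeasurable \<Longrightarrow> bdd_above (range (PP A))"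
  using PP_le by (auto intro!: bdd_aboveI)

lemma PP_le_MM: "A \<in> lmeasurable \<Longrightarrow> PP A d \<le> MM A"
  unfolding MM_def by (rule cSup_upper) (auto intro: MM_bdd)

lemma MM_nonneg: "A \<in> lmeasurable \<Longrightarrow> 0 \<le> MM A"
  using PP_le_MM[of A 0] PP_nonneg[of A 0] by linarith

lemma MM_least: "(\<And>d. PP A d \<le> s) \<Longrightarrow> MM A \<le> s"
  unfolding MM_def by (rule cSup_least) auto

lemma torus_set_alt: "torus_set E = (\<Union>k\<in>(UNIV::int set). {x. of_int k + 1*x \<in> E})"
  by (auto simp: torus_set_def add.commute)

lemma torus_sets: "E \<in> sets lebesgue \<Longrightarrow> torus_set E \<in> sets lebesgue"
  unfolding torus_set_alt by (intro sets.countable_UN') (use aff_sets[of E 1] in auto)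

lemma torus_periodic: "(x + 1 \<in> torus_set E) = (x \<in> torus_set E)"
proof
  assume "x + 1 \<in> torus_set E"
  then obtain k :: int where "x + 1 + of_int k \<in> E" by (auto simp: torus_set_def)
  then have "x + of_int (k+1) \<in> E" by (simp add: algebra_simps)
  then show "x \<in> torus_set E" unfolding torus_set_def by blast
next
  assume "x \<in> torus_set E"
  then obtain k :: int where "x + of_int k \<in> E" by (auto simp: torus_set_def)
  then have "x + 1 + of_int (k-1) \<in> E" by simp
  then show "x + 1 \<in> torus_set E" unfolding torus_set_def by blast
qed

lemma int_small: "-1 < real_of_int k \<Longrightarrow> real_of_int k < 1 \<Longrightarrow> k = 0"
  by linarith

lemma torus_window:
  assumes "E \<subseteq> {-1/4..1/4}"
  shows "torus_set E \<inter> {-1/2..1/2} = E"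
proof (rule set_eqI, rule iffI)
  fix x assume x: "x \<in> torus_set E \<inter> {-1/2..1/2}"
  then obtain k :: int where k: "x + of_int k \<in> E" by (auto simp: torus_set_def)
  then have "-1/4 \<le> x + of_int k" "x + of_int k \<le> 1/4" using assms by auto
  then have "k = 0" using x by (intro int_small) auto
  then show "x \<in> E" using k by simp
next
  fix x assume "x \<in> E"
  then show "x \<in> torus_set E \<inter> {-1/2..1/2}" using assms
    by (auto simp: torus_set_def intro!: exI[of _ 0])
qed

lemma lm_bounded: "S \<in> sets lebesgue \<Longrightarrow> S \<subseteq> {a..b::real} \<Longrightarrow> S \<in> lmeasurable"
  by (rule bounded_set_imp_lmeasurable) (auto intro: bounded_subset[OF bounded_closed_interval])

lemma periodic_measure:
  fixes W :: "real set"
  assumes W: "W \<in> sets lebesgue" and per: "\<And>x. (x + 1 \<in> W) = (x \<in> W)"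
  shows "measure lebesgue (W \<inter> {0..1}) = measure lebesgue (W \<inter> {-1/2..1/2})"
proof -
  let ?W1 = "W \<inter> {0..1/2}" and ?W2 = "W \<inter> {1/2..1}" and ?W3 = "W \<inter> {-1/2..0}"
  have L1: "?W1 \<in> lmeasurable" by (rule lm_bounded[of _ 0 "1/2"]) (use W in auto)
  have L2: "?W2 \<in> lmeasurable" by (rule lm_bounded[of _ "1/2" 1]) (use W in auto)
  have L3: "?W3 \<in> lmeasurable" by (rule lm_bounded[of _ "-1/2" 0]) (use W in auto)
  have e1: "W \<inter> {0..1} = ?W1 \<union> ?W2" by auto
  have e2: "W \<inter> {-1/2..1/2} = ?W3 \<union> ?W1" by auto
  have e3: "?W2 = (+) 1 ` ?W3"
  proof (rule set_eqI, rule iffI)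
    fix y assume y: "y \<in> ?W2"
    then have "y - 1 \<in> W" using per[of "y-1"] by simp
    then show "y \<in> (+) 1 ` ?W3" using y by (intro image_eqI[where x="y-1"]) auto
  next
    fix y assume "y \<in> (+) 1 ` ?W3"
    then obtain z where z: "z \<in> ?W3" "y = 1 + z" by auto
    then show "y \<in> ?W2" using per[of z] by (auto simp: add.commute)
  qed
  have i1: "measure lebesgue (?W1 \<inter> ?W2) = 0" by (rule singleton_sub_measure[of _ "1/2"]) auto
  have i2: "measure lebesgue (?W3 \<inter> ?W1) = 0" by (rule singleton_sub_measure[of _ 0]) auto
  have "measure lebesgue (W \<inter> {0..1}) = measure lebesgue ?W1 + measure lebesgue ?W2"
    unfolding e1 using measure_Un3[OF L1 L2] i1 by simp
  also have "measure lebesgue ?W2 = measure lebesgue ?W3" unfolding e3 by (rule measure_translation)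
  also have "measure lebesgue ?W1 + measure lebesgue ?W3 = measure lebesgue (W \<inter> {-1/2..1/2})"
    unfolding e2 using measure_Un3[OF L3 L1] i2 by simp
  finally show ?thesis .
qed

lemma nif_eq: "nif_of E x = indicator (torus_set E) x / measure lebesgue E"
  by (simp add: nif_of_def indicator_def)

lemma lebesgue_on_01: "{0..1::real} \<inter> space lebesgue \<in> sets lebesgue" by simp

lemma integral_ind01:
  assumes "S \<in> sets lebesgue"
  shows "integral\<^sup>L (lebesgue_on {0..1}) (indicator S :: real \<Rightarrow> real) = measure lebesgue (S \<inter> {0..1})"
proof -
  have "integral\<^sup>L (lebesgue_on {0..1}) (indicator S :: real \<Rightarrow> real) = measure (lebesgue_on {0..1}) (S \<inter> {0..1})"
    by simp
  also have "\<dots> = measure lebesgue (S \<inter> {0..1})"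
    by (rule measure_restrict_space[OF lebesgue_on_01]) auto
  finally show ?thesis .
qed

lemma integrable_ind01:
  assumes "S \<in> sets lebesgue"
  shows "integrable (lebesgue_on {0..1}) (indicator S :: real \<Rightarrow> real)"
proof -
  have L: "S \<inter> {0..1} \<in> lmeasurable" by (rule lm_bounded[of _ 0 1]) (use assms in auto)
  have "emeasure (lebesgue_on {0..1}) (S \<inter> {0..1}) = emeasure lebesgue (S \<inter> {0..1})"
    by (rule emeasure_restrict_space[OF lebesgue_on_01]) auto
  also have "\<dots> < \<infinity>" using L unfolding fmeasurable_def by blast
  finally show ?thesis unfolding integrable_indicator_iff
    using fmeasurableD[OF L] by (simp add: sets_restrict_space_iff)
qed


lemma conv_nif:
  assumes E: "E \<in> sets lebesgue" "E \<subseteq> {-1/4..1/4}" and c: "c \<in> {0..1}"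
  shows "conv (nif_of E) (nif_of E) c = (PP E c + PP E (c - 1)) / (measure lebesgue E)^2"
proof -
  let ?U = "torus_set E" and ?m = "measure lebesgue E"
  define W where "W = {x. x \<in> ?U \<and> c - x \<in> ?U}"
  have U: "?U \<in> sets lebesgue" using E(1) by (rule torus_sets)
  have Wa: "W = ?U \<inter> {x. c + (-1)*x \<in> ?U}" unfolding W_def by auto
  have Ws: "W \<in> sets lebesgue" unfolding Wa using aff_sets[OF U, of "-1" c] U by auto
  have fe: "(\<lambda>x. nif_of E x * nif_of E (c - x)) = (\<lambda>x. indicator W x / ?m^2)"
    by (auto simp: nif_eq indicator_def power2_eq_square W_def)
  have "conv (nif_of E) (nif_of E) c = integral\<^sup>L (lebesgue_on {0..1}) (\<lambda>x. indicator W x / ?m^2)"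
    unfolding conv_def fe ..
  also have "\<dots> = measure lebesgue (W \<inter> {0..1}) / ?m^2"
    using integral_ind01[OF Ws] by simp
  also have "measure lebesgue (W \<inter> {0..1}) = measure lebesgue (W \<inter> {-1/2..1/2})"
  proof (rule periodic_measure[OF Ws])
    fix x :: real
    have "(c - (x + 1) \<in> ?U) = (c - x \<in> ?U)" using torus_periodic[of "c - (x+1)" E] by simp
    then show "(x + 1 \<in> W) = (x \<in> W)" unfolding W_def using torus_periodic[of x E] by simp
  qed
  also have "W \<inter> {-1/2..1/2} = {x\<in>E. c - x \<in> E} \<union> {x\<in>E. (c - 1) - x \<in> E}"
  proof -
    have "W \<inter> {-1/2..1/2} = {x\<in>E. c - x \<in> ?U}"
      using torus_window[OF E(2)] unfolding W_def by blast
    also have "\<dots> = {x\<in>E. c - x \<in> E} \<union> {x\<in>E. (c - 1) - x \<in> E}"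
    proof (rule set_eqI, rule iffI)
      fix x assume x: "x \<in> {x\<in>E. c - x \<in> ?U}"
      then obtain k :: int where k: "c - x + of_int k \<in> E" by (auto simp: torus_set_def)
      have "-1/4 \<le> x" "x \<le> 1/4" using x E(2) by auto
      moreover have "-1/4 \<le> c - x + of_int k" "c - x + of_int k \<le> 1/4" using k E(2) by auto
      ultimately have "-2 < real_of_int k" "real_of_int k < 1" using c by auto
      then have "-2 < k" "k < 1" by linarith+
      then have "k = 0 \<or> k = -1" by linarith
      then show "x \<in> {x\<in>E. c - x \<in> E} \<union> {x\<in>E. (c - 1) - x \<in> E}"
        using k x by (auto simp: algebra_simps)
    next
      fix x assume "x \<in> {x\<in>E. c - x \<in> E} \<union> {x\<in>E. (c - 1) - x \<in> E}"
      then show "x \<in> {x\<in>E. c - x \<in> ?U}"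
      proof
        assume "x \<in> {x\<in>E. c - x \<in> E}"
        then show ?thesis unfolding torus_set_def by (auto intro!: exI[of _ 0])
      next
        assume "x \<in> {x\<in>E. (c - 1) - x \<in> E}"
        then show ?thesis unfolding torus_set_def by (auto intro!: exI[of _ "-1"] simp: algebra_simps)
      qed
    qed
    finally show ?thesis .
  qed
  also have "measure lebesgue ({x\<in>E. c - x \<in> E} \<union> {x\<in>E. (c - 1) - x \<in> E}) = PP E c + PP E (c - 1)"
  proof -
    have L1: "{x\<in>E. c - x \<in> E} \<in> lmeasurable"
      by (rule lm_bounded[of _ "-1/4" "1/4"]) (use PP_sets[OF E(1)] E(2) in auto)
    have L2: "{x\<in>E. (c - 1) - x \<in> E} \<in> lmeasurable"
      by (rule lm_bounded[of _ "-1/4" "1/4"]) (use PP_sets[OF E(1)] E(2) in auto)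
    have "{x\<in>E. c - x \<in> E} \<inter> {x\<in>E. (c - 1) - x \<in> E} = {}"
    proof (rule ccontr)
      assume "{x\<in>E. c - x \<in> E} \<inter> {x\<in>E. (c - 1) - x \<in> E} \<noteq> {}"
      then obtain x where x1: "c - x \<in> E" and x2: "(c - 1) - x \<in> E" by blast
      have "c - x \<le> 1/4" using subsetD[OF E(2) x1] by simp
      moreover have "-1/4 \<le> (c - 1) - x" using subsetD[OF E(2) x2] by simp
      ultimately show False by linarith
    qed
    then show ?thesis using measure_Un3[OF L1 L2] unfolding PP_def by simp
  qed
  finally show ?thesis .
qed

lemma nif_pdf:
  assumes E: "E \<in> sets lebesgue" "E \<subseteq> {-1/4..1/4}" and m: "measure lebesgue E > 0"
  shows "pdf (nif_of E)"
proof -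
  let ?U = "torus_set E" and ?m = "measure lebesgue E"
  have U: "?U \<in> sets lebesgue" using E(1) by (rule torus_sets)
  have fe: "nif_of E = (\<lambda>x. indicator ?U x / ?m)" by (auto simp: nif_eq)
  have "periodic1 (nif_of E)" unfolding periodic1_def fe using torus_periodic[of _ E]
    by (auto simp: indicator_def)
  moreover have "\<forall>x. 0 \<le> nif_of E x" unfolding fe by auto
  moreover have "nif_of E \<in> borel_measurable (lebesgue_on {0..1})"
    unfolding fe by (intro measurable_restrict_space1 borel_measurable_divide borel_measurable_indicator U) simp
  moreover have "integrable (lebesgue_on {0..1}) (\<lambda>x. (nif_of E x)^2)"
  proof -
    have "(\<lambda>x. (nif_of E x)^2) = (\<lambda>x. indicator ?U x / ?m^2)"
      unfolding fe by (auto simp: indicator_def power2_eq_square)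
    then show ?thesis using integrable_ind01[OF U] by simp
  qed
  moreover have "integral\<^sup>L (lebesgue_on {0..1}) (nif_of E) = 1"
  proof -
    have "integral\<^sup>L (lebesgue_on {0..1}) (nif_of E) = measure lebesgue (?U \<inter> {0..1}) / ?m"
      unfolding fe using integral_ind01[OF U] by simp
    also have "measure lebesgue (?U \<inter> {0..1}) = measure lebesgue (?U \<inter> {-1/2..1/2})"
      by (rule periodic_measure[OF U]) (rule torus_periodic)
    also have "?U \<inter> {-1/2..1/2} = E" by (rule torus_window[OF E(2)])
    finally show ?thesis using m by simp
  qed
  ultimately show ?thesis unfolding pdf_def by blast
qed


lemma esssup_cont_lower:
  fixes h :: "real \<Rightarrow> real"
  assumes h: "continuous_on UNIV h" and c0: "c0 \<in> {0..1}"
  shows "ereal (h c0) \<le> esssup (lebesgue_on {0..1}) (\<lambda>c. ereal (h c))"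
proof (rule ccontr)
  let ?z = "esssup (lebesgue_on {0..1}) (\<lambda>c. ereal (h c))"
  assume "\<not> ereal (h c0) \<le> ?z"
  then have lt: "?z < ereal (h c0)" by simp
  obtain w where w: "?z < ereal w" "ereal w < ereal (h c0)" using ereal_dense2[OF lt] by blast
  have wl: "w < h c0" using w(2) by simp
  have "open {x. w < h x}" using h by (intro open_Collect_less continuous_on_const) auto
  then obtain r where r: "r > 0" "ball c0 r \<subseteq> {x. w < h x}" using wl by (auto elim!: openE)
  define s where "s = min r (1/2)"
  have s: "0 < s" "s \<le> r" "s \<le> 1/2" using r(1) by (auto simp: s_def)
  obtain a b where ab: "a < b" "{a<..<b} \<subseteq> {0..1}" "{a<..<b} \<subseteq> ball c0 r"
  proof (cases "c0 \<le> 1/2")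
    case True
    show ?thesis
      by (rule that[of c0 "c0 + s"]) (use s c0 True in \<open>auto simp: dist_real_def\<close>)
  next
    case False
    show ?thesis
      by (rule that[of "c0 - s" c0]) (use s c0 False in \<open>auto simp: dist_real_def\<close>)
  qed
  have "AE c in lebesgue_on {0..1}. ereal (h c) \<le> ?z" by (rule esssup_AE)
  then have "AE c in lebesgue. c \<in> {0..1} \<longrightarrow> ereal (h c) \<le> ?z"
    using AE_restrict_space_iff[OF lebesgue_on_01] by simp
  then have "AE c in lebesgue. c \<notin> {a<..<b}"
  proof (rule eventually_mono)
    fix c assume c: "c \<in> {0..1} \<longrightarrow> ereal (h c) \<le> ?z"
    show "c \<notin> {a<..<b}"
    proof
      assume cab: "c \<in> {a<..<b}"
      then have "c \<in> {0..1}" "w < h c" using ab r(2) by auto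
      then have a1: "ereal (h c) \<le> ?z" "w < h c" using c by auto
      have "ereal (h c) < ereal w" by (rule le_less_trans[OF a1(1) w(1)])
      then show False using a1(2) by simp
    qed
  qed
  then have "emeasure lebesgue {a<..<b} = 0"
    by (subst (asm) AE_iff_measurable[of "{a<..<b}"]) auto
  moreover have "emeasure lebesgue {a<..<b} = ennreal (b - a)"
    using ab(1) by simp
  ultimately show False using ab(1) by simp
qed

lemma PP_empty: assumes "{x\<in>A. d - x \<in> A} = {}" shows "PP A d = 0"
  unfolding PP_def assms by simp

lemma PP_zero_out:
  assumes E: "E \<subseteq> {-1/4..1/4}"
    and H: "\<And>x. -1/4 \<le> x \<Longrightarrow> x \<le> 1/4 \<Longrightarrow> -1/4 \<le> d - x \<Longrightarrow> d - x \<le> 1/4 \<Longrightarrow> False"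
  shows "PP E d = 0"
proof (rule PP_empty)
  show "{x\<in>E. d - x \<in> E} = {}"
  proof (rule ccontr)
    assume "{x\<in>E. d - x \<in> E} \<noteq> {}"
    then obtain x where x: "x \<in> E" "d - x \<in> E" by blast
    show False using H subsetD[OF E x(1)] subsetD[OF E x(2)] by auto
  qed
qed

lemma supnorm_nif:
  assumes E: "E \<in> sets lebesgue" "E \<subseteq> {-1/4..1/4}" and m: "measure lebesgue E > 0"
  shows "supnorm (conv (nif_of E) (nif_of E)) = ereal (MM E / (measure lebesgue E)^2)"
proof -
  let ?m = "measure lebesgue E"
  define h where "h c = (PP E c + PP E (c - 1)) / ?m^2" for c
  have El: "E \<in> lmeasurable" by (rule lm_bounded[OF E(1) E(2)])
  have bE: "bounded E" by (rule bounded_subset[OF bounded_closed_interval E(2)])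
  have c1: "continuous_on UNIV (PP E)" by (rule PP_cont_on[OF E(1) bE])
  have c2: "continuous_on UNIV (\<lambda>c. PP E (c - 1))"
    by (rule continuous_on_compose2[OF c1]) (auto intro: continuous_intros)
  have hc: "continuous_on UNIV h" unfolding h_def using c1 c2 m by (intro continuous_intros) auto
  have hnn: "0 \<le> h c" for c unfolding h_def using PP_nonneg[of E] by simp
  have conv_eq: "conv (nif_of E) (nif_of E) c = h c" if "c \<in> {0..1}" for c
    unfolding h_def by (rule conv_nif[OF E that])
  have meas: "(\<lambda>c. ereal (h c)) \<in> borel_measurable (lebesgue_on {0..1})"
    using continuous_imp_measurable_on_sets_lebesgue[OF continuous_on_subset[OF hc], of "{0..1}"]
    by auto
  have meas2: "(\<lambda>c. ereal \<bar>conv (nif_of E) (nif_of E) c\<bar>) \<in> borel_measurable (lebesgue_on {0..1})"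
    using meas by (subst measurable_cong[where g="\<lambda>c. ereal (h c)"]) (auto simp: conv_eq hnn)
  have supeq: "supnorm (conv (nif_of E) (nif_of E)) = esssup (lebesgue_on {0..1}) (\<lambda>c. ereal (h c))"
    unfolding supnorm_def
    by (rule esssup_AE_cong[OF meas2 meas]) (rule AE_I2, auto simp: conv_eq hnn)
  have up: "h c \<le> MM E / ?m^2" if c: "c \<in> {0..1}" for c
  proof -
    have "PP E c + PP E (c - 1) \<le> MM E"
    proof (cases "c < 1/2")
      case True
      have "PP E (c - 1) = 0"
        by (rule PP_zero_out[OF E(2)]) (use True in linarith)
      then show ?thesis using PP_le_MM[OF El, of c] by simp
    next
      case False
      have "PP E c = 0"
      proof (cases "c = 1/2")
        case True
        show ?thesis unfolding PP_def
        proof (rule singleton_sub_measure[of _ "1/4"], rule subsetI)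
          fix x assume "x \<in> {x\<in>E. c - x \<in> E}"
          then have "x \<in> E" "c - x \<in> E" by auto
          then have "x \<le> 1/4" "c - x \<le> 1/4" using subsetD[OF E(2)] by fastforce+
          then show "x \<in> {1/4}" using True by simp
        qed
      next
        case False2: False
        show ?thesis
          by (rule PP_zero_out[OF E(2)]) (use False False2 in linarith)
      qed
      then show ?thesis using PP_le_MM[OF El, of "c - 1"] by simp
    qed
    then show ?thesis unfolding h_def by (intro divide_right_mono) auto
  qed
  let ?S = "esssup (lebesgue_on {0..1}) (\<lambda>c. ereal (h c))"
  have upper: "?S \<le> ereal (MM E / ?m^2)"
    by (rule esssup_I[OF meas]) (rule AE_I2, auto intro: up)
  have lower: "ereal (PP E d / ?m^2) \<le> ?S" for d
  proof -
    have "\<exists>c0\<in>{0..1}. PP E d / ?m^2 \<le> h c0"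
    proof (cases "0 \<le> d \<and> d \<le> 1")
      case True
      then show ?thesis unfolding h_def using PP_nonneg[of E "d - 1"]
        by (intro bexI[of _ d]) (auto intro: divide_right_mono)
    next
      case F1: False
      show ?thesis
      proof (cases "-1 \<le> d \<and> d < 0")
        case True
        then show ?thesis unfolding h_def using PP_nonneg[of E "d + 1"]
          by (intro bexI[of _ "d + 1"]) (auto intro: divide_right_mono)
      next
        case False
        have "PP E d = 0"
          by (rule PP_zero_out[OF E(2)]) (use False F1 in linarith)
        then show ?thesis using hnn[of 0] by (intro bexI[of _ 0]) auto
      qed
    qed
    then obtain c0 where c0: "c0 \<in> {0..1}" "PP E d / ?m^2 \<le> h c0" by blast
    have "ereal (PP E d / ?m^2) \<le> ereal (h c0)" using c0(2) by simp
    also have "\<dots> \<le> ?S" by (rule esssup_cont_lower[OF hc c0(1)])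
    finally show ?thesis .
  qed
  have "ereal (MM E / ?m^2) \<le> ?S"
  proof (cases ?S)
    case (real s)
    have "PP E d \<le> s * ?m^2" for d
    proof -
      have "PP E d / ?m^2 \<le> s" using lower[of d] real by simp
      then show ?thesis using m by (simp add: divide_le_eq)
    qed
    then have "MM E \<le> s * ?m^2" by (rule MM_least)
    then show ?thesis using real m by (simp add: divide_le_eq)
  next
    case PInf
    then show ?thesis by simp
  next
    case MInf
    then show ?thesis using lower[of 0] by simp
  qed
  then show ?thesis using upper supeq by simp
qed


lemma D_eq_MM:
  fixes A :: "real set"
  assumes A: "A \<in> sets lebesgue" "bounded A"
  shows "D A = MM A"
proof -
  have Al: "A \<in> lmeasurable" using A by (simp add: bounded_set_imp_lmeasurable)
  define SD where "SD = {measure lebesgue C | C. C \<in> sets lebesgue \<and> C \<subseteq> A \<and> symmetric_set C}"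
  have inSD: "PP A d \<in> SD" for d
  proof -
    have "symmetric_set {x\<in>A. d - x \<in> A}"
      unfolding symmetric_set_def by (intro exI[of _ "d/2"]) (auto simp: algebra_simps)
    then show ?thesis unfolding SD_def PP_def using PP_sets[OF A(1), of d] by blast
  qed
  have leSD: "\<exists>a\<in>range (PP A). b \<le> a" if "b \<in> SD" for b
  proof -
    obtain C where C: "b = measure lebesgue C" "C \<in> sets lebesgue" "C \<subseteq> A" "symmetric_set C"
      using \<open>b \<in> SD\<close> unfolding SD_def by blast
    obtain c where c: "\<And>x. (c + x \<in> C) = (c - x \<in> C)" using C(4) unfolding symmetric_set_def by blast
    have sub: "C \<subseteq> {x\<in>A. 2*c - x \<in> A}"
    proof
      fix y assume y: "y \<in> C"
      have "c + (y - c) \<in> C" using y by simp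
      then have "c - (y - c) \<in> C" using c by blast
      then have "2*c - y \<in> C" by (simp add: algebra_simps)
      then show "y \<in> {x\<in>A. 2*c - x \<in> A}" using y C(3) by auto
    qed
    have "b \<le> PP A (2*c)" unfolding C(1) PP_def
      by (rule measure_mono_fmeasurable[OF sub C(2)])
         (rule fmeasurableI2[OF Al _ PP_sets[OF A(1)]], blast)
    then show ?thesis by blast
  qed
  have bddSD: "bdd_above SD"
  proof (rule bdd_aboveI)
    fix b assume "b \<in> SD"
    then obtain d where "b \<le> PP A d" using leSD by blast
    then show "b \<le> measure lebesgue A" using PP_le[OF Al, of d] by linarith
  qed
  have "D A = Sup SD" unfolding D_def SD_def ..
  moreover have "Sup SD \<le> MM A" unfolding MM_def
    by (rule cSup_mono) (use inSD MM_bdd[OF Al] leSD in auto)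
  moreover have "MM A \<le> Sup SD" unfolding MM_def
    by (rule cSup_mono) (use inSD bddSD in auto)
  ultimately show ?thesis by simp
qed

lemma PP_remove:
  assumes "A \<in> sets lebesgue"
  shows "PP (A - {p}) d = PP A d"
proof -
  have "{x\<in>A - {p}. d - x \<in> A - {p}} = {x\<in>A. d - x \<in> A} - {p, d - p}" by auto
  moreover have "{p, d - p} \<in> null_sets lebesgue" by simp
  ultimately show ?thesis unfolding PP_def using measure_Diff_null_set[OF PP_sets[OF assms]] by simp
qed

lemma T_image: "(\<lambda>x::real. 2*x + 1/2) ` E = {y. -1/4 + 1/2*y \<in> E}"
proof (rule set_eqI, rule iffI)
  fix y assume "y \<in> (\<lambda>x::real. 2*x + 1/2) ` E"
  then obtain x where x: "x \<in> E" "y = 2*x + 1/2" by auto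
  then have "-1/4 + 1/2*y = x" by (simp add: field_simps)
  then show "y \<in> {y. -1/4 + 1/2*y \<in> E}" using x by simp
next
  fix y assume "y \<in> {y. -1/4 + 1/2*y \<in> E}"
  then show "y \<in> (\<lambda>x::real. 2*x + 1/2) ` E"
    by (intro image_eqI[where x="-1/4 + 1/2*y"]) auto
qed

lemma T_sets: "E \<in> sets lebesgue \<Longrightarrow> (\<lambda>x::real. 2*x + 1/2) ` E \<in> sets lebesgue"
  unfolding T_image by (rule aff_sets) auto

lemma T_measure: "measure lebesgue ((\<lambda>x::real. 2*x + 1/2) ` E) = 2 * measure lebesgue E"
proof -
  have "(\<lambda>x::real. 2*x + 1/2) = (\<lambda>x. 2 *\<^sub>R x + 1/2)" by auto
  then show ?thesis using measure_lebesgue_affine[of 2 "1/2" E] by simp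
qed

lemma PP_affine: "PP ((\<lambda>x::real. 2*x + 1/2) ` E) (2*c + 1) = 2 * PP E c"
proof -
  let ?T = "\<lambda>x::real. 2*x + 1/2"
  have "{y\<in>?T ` E. (2*c + 1) - y \<in> ?T ` E} = ?T ` {x\<in>E. c - x \<in> E}"
  proof (rule set_eqI, rule iffI)
    fix y assume y: "y \<in> {y\<in>?T ` E. (2*c + 1) - y \<in> ?T ` E}"
    then obtain x where x: "x \<in> E" "y = ?T x" by auto
    obtain x' where x': "x' \<in> E" "(2*c + 1) - y = ?T x'" using y by auto
    have "x' = c - x" using x(2) x'(2) by simp
    then show "y \<in> ?T ` {x\<in>E. c - x \<in> E}" using x x'(1) by auto
  next
    fix y assume "y \<in> ?T ` {x\<in>E. c - x \<in> E}"
    then obtain x where x: "x \<in> E" "c - x \<in> E" "y = ?T x" by auto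
    have "(2*c + 1) - y = ?T (c - x)" using x(3) by simp
    then have "(2*c + 1) - y \<in> ?T ` E" using x(2) by (metis image_eqI)
    then show "y \<in> {y\<in>?T ` E. (2*c + 1) - y \<in> ?T ` E}" using x by auto
  qed
  then show ?thesis unfolding PP_def using T_measure by simp
qed

lemma Sup_range_scale:
  fixes f :: "'a \<Rightarrow> real"
  assumes b: "bdd_above (range f)" and k: "k > 0"
  shows "Sup (range (\<lambda>c. k * f c)) = k * Sup (range f)"
proof (rule antisym)
  show "Sup (range (\<lambda>c. k * f c)) \<le> k * Sup (range f)"
    by (rule cSup_least) (use k cSup_upper[OF _ b] in auto)
  obtain M where M: "\<And>c. f c \<le> M" using b by (auto simp: bdd_above_def)
  have b2: "bdd_above (range (\<lambda>c. k * f c))"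
    by (rule bdd_aboveI[of _ "k*M"]) (use M k in \<open>auto intro: mult_left_mono\<close>)
  have "Sup (range f) \<le> Sup (range (\<lambda>c. k * f c)) / k"
  proof (rule cSup_least)
    fix y assume "y \<in> range f"
    then obtain c where "y = f c" by auto
    moreover have "k * f c \<le> Sup (range (\<lambda>c. k * f c))" by (rule cSup_upper[OF _ b2]) auto
    ultimately show "y \<le> Sup (range (\<lambda>c. k * f c)) / k" using k by (simp add: le_divide_eq mult.commute)
  qed auto
  then show "k * Sup (range f) \<le> Sup (range (\<lambda>c. k * f c))" using k by (simp add: le_divide_eq mult.commute)
qed

lemma MM_affine:
  assumes E: "E \<in> sets lebesgue" "E \<subseteq> {-1/4..1/4}"
  shows "MM ((\<lambda>x::real. 2*x + 1/2) ` E - {1}) = 2 * MM E"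
proof -
  let ?A = "(\<lambda>x::real. 2*x + 1/2) ` E - {1}"
  have TE: "(\<lambda>x::real. 2*x + 1/2) ` E \<in> sets lebesgue" by (rule T_sets[OF E(1)])
  have El: "E \<in> lmeasurable" by (rule lm_bounded[OF E(1) E(2)])
  have "range (PP ?A) = range (\<lambda>c. PP ?A (2*c + 1))"
  proof (rule set_eqI, rule iffI)
    fix y assume "y \<in> range (PP ?A)"
    then obtain d where "y = PP ?A d" by auto
    moreover have "2*((d-1)/2) + 1 = d" by (simp add: field_simps)
    ultimately have "y = PP ?A (2*((d-1)/2) + 1)" by simp
    then show "y \<in> range (\<lambda>c. PP ?A (2*c + 1))" by blast
  qed auto
  also have "\<dots> = range (\<lambda>c. 2 * PP E c)"
    using PP_remove[OF TE] PP_affine by simp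
  finally have "MM ?A = Sup (range (\<lambda>c. 2 * PP E c))" unfolding MM_def by simp
  also have "\<dots> = 2 * MM E" unfolding MM_def by (rule Sup_range_scale[OF MM_bdd[OF El]]) simp
  finally show ?thesis .
qed

lemma Delta_eq:
  assumes "0 < \<epsilon>" "\<epsilon> \<le> 1"
  shows "Delta \<epsilon> = Inf ((\<lambda>E. 2 * MM E) ` {E. E \<in> sets lebesgue \<and> E \<subseteq> {-1/4..1/4}
                         \<and> measure lebesgue E = \<epsilon> / 2})"
proof -
  let ?SE = "{E::real set. E \<in> sets lebesgue \<and> E \<subseteq> {-1/4..1/4} \<and> measure lebesgue E = \<epsilon> / 2}"
  let ?T = "\<lambda>x::real. 2*x + 1/2"
  have "{D A | A. A \<subseteq> {0..<1} \<and> A \<in> sets lebesgue \<and> measure lebesgue A = \<epsilon>} = (\<lambda>E. 2 * MM E) ` ?SE"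
  proof (rule set_eqI, rule iffI)
    fix y assume "y \<in> {D A | A. A \<subseteq> {0..<1} \<and> A \<in> sets lebesgue \<and> measure lebesgue A = \<epsilon>}"
    then obtain A where A: "y = D A" "A \<subseteq> {0..<1}" "A \<in> sets lebesgue" "measure lebesgue A = \<epsilon>" by blast
    define E where "E = {x. 1/2 + 2*x \<in> A}"
    have Es: "E \<in> sets lebesgue" unfolding E_def by (rule aff_sets[OF A(3)]) simp
    have Em: "measure lebesgue E = \<epsilon>/2" unfolding E_def using aff_measure[of 2 "1/2" A] A(4) by simp
    have Esub: "E \<subseteq> {-1/4..1/4}" unfolding E_def using A(2) by auto
    have TEA: "?T ` E = A"
    proof (rule set_eqI, rule iffI)
      fix y assume "y \<in> ?T ` E" then show "y \<in> A" unfolding E_def by (auto simp: add.commute)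
    next
      fix y assume y: "y \<in> A"
      define x where "x = (y - 1/2)/2"
      have e1: "y = 2*x + 1/2" "1/2 + 2*x = y" unfolding x_def by (simp_all add: field_simps)
      have "x \<in> E" unfolding E_def using e1(2) y by simp
      then show "y \<in> ?T ` E" using e1(1) by blast
    qed
    have "A - {1} = A" using A(2) by auto
    moreover have bA: "bounded A"
      by (rule bounded_subset[OF bounded_closed_interval[of "0::real" 1]]) (use A(2) in auto)
    ultimately have "D A = 2 * MM E"
      using D_eq_MM[OF A(3) bA] MM_affine[OF Es Esub] TEA
      by simp
    then show "y \<in> (\<lambda>E. 2 * MM E) ` ?SE" using A(1) Es Em Esub by auto
  next
    fix y assume "y \<in> (\<lambda>E. 2 * MM E) ` ?SE"
    then obtain E where E: "y = 2 * MM E" "E \<in> sets lebesgue" "E \<subseteq> {-1/4..1/4}" "measure lebesgue E = \<epsilon>/2"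
      by blast
    let ?A = "?T ` E - {1}"
    have As: "?A \<in> sets lebesgue" using T_sets[OF E(2)] by auto
    have Asub: "?A \<subseteq> {0..<1}" using E(3) by force
    have Am: "measure lebesgue ?A = \<epsilon>"
      using measure_Diff_null_set[OF T_sets[OF E(2)], of "{1}"] T_measure[of E] E(4) by simp
    have bA: "bounded ?A"
      by (rule bounded_subset[OF bounded_closed_interval[of "0::real" 1]]) (use Asub in auto)
    have DA: "D ?A = 2 * MM E"
      using D_eq_MM[OF As bA] MM_affine[OF E(2) E(3)] by simp
    show "y \<in> {D A | A. A \<subseteq> {0..<1} \<and> A \<in> sets lebesgue \<and> measure lebesgue A = \<epsilon>}"
      unfolding mem_Collect_eq by (rule exI[of _ ?A]) (use E(1) DA As Asub Am in simp)
  qed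
  then show ?thesis unfolding Delta_def by simp
qed


lemma ereal_cmult_INF:
  assumes "k > (0::real)"
  shows "ereal k * (INF x\<in>S. f x) = (INF x\<in>S. ereal k * f x)"
proof -
  have "bij ((*) (ereal k))"
    apply (rule bij_betw_byWitness[of _ "\<lambda>x. (x::ereal) / k"], auto simp: assms ereal_mult_divide)
    using assms ereal_divide_eq by auto
  moreover have "mono ((*) (ereal k))"
    using assms by (simp add: ereal_mult_left_mono less_imp_le mono_def)
  ultimately show ?thesis using mono_bij_Inf[of "(*) (ereal k)" "f ` S"] by (simp add: image_comp)
qed

lemma torus_set_mono: "E \<subseteq> F \<Longrightarrow> torus_set E \<subseteq> torus_set F"
  unfolding torus_set_def by blast

theorem lemma2p6:
  fixes \<epsilon> :: real
  assumes "0 < \<epsilon>" and "\<epsilon> \<le> 1"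
  shows "ereal (\<epsilon>^2 / 2) *
           (INF g \<in> {g. pdf g \<and> (\<forall>x. x \<notin> torus_set {-1/4..1/4} \<longrightarrow> g x = 0)}.
              supnorm (conv g g))
         \<le> ereal (\<epsilon>^2 / 2) *
           (INF E \<in> {E. E \<in> sets lebesgue \<and> E \<subseteq> {-1/4..1/4}
                         \<and> measure lebesgue E = \<epsilon> / 2}.
              supnorm (conv (nif_of E) (nif_of E)))
       \<and> ereal (\<epsilon>^2 / 2) *
           (INF E \<in> {E. E \<in> sets lebesgue \<and> E \<subseteq> {-1/4..1/4}
                         \<and> measure lebesgue E = \<epsilon> / 2}.
              supnorm (conv (nif_of E) (nif_of E)))
         = ereal (Delta \<epsilon>)"
proof
  let ?SE = "{E::real set. E \<in> sets lebesgue \<and> E \<subseteq> {-1/4..1/4} \<and> measure lebesgue E = \<epsilon> / 2}"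
  let ?SG = "{g. pdf g \<and> (\<forall>x. x \<notin> torus_set {-1/4..1/4} \<longrightarrow> g x = (0::real))}"
  have "(INF g \<in> ?SG. supnorm (conv g g)) \<le> (INF E \<in> ?SE. supnorm (conv (nif_of E) (nif_of E)))"
  proof (rule INF_mono)
    fix E assume E: "E \<in> ?SE"
    then have Es: "E \<in> sets lebesgue" "E \<subseteq> {-1/4..1/4}" "measure lebesgue E > 0" using assms by auto
    have "nif_of E \<in> ?SG"
    proof -
      have "pdf (nif_of E)" by (rule nif_pdf[OF Es])
      moreover have "nif_of E x = 0" if "x \<notin> torus_set {-1/4..1/4}" for x
        using that torus_set_mono[OF Es(2)] by (auto simp: nif_of_def)
      ultimately show ?thesis by blast
    qed
    then show "\<exists>g\<in>?SG. supnorm (conv g g) \<le> supnorm (conv (nif_of E) (nif_of E))" by blast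
  qed
  then show "ereal (\<epsilon>^2 / 2) * (INF g \<in> ?SG. supnorm (conv g g))
      \<le> ereal (\<epsilon>^2 / 2) * (INF E \<in> ?SE. supnorm (conv (nif_of E) (nif_of E)))"
    by (rule ereal_mult_left_mono) simp
next
  let ?SE = "{E::real set. E \<in> sets lebesgue \<and> E \<subseteq> {-1/4..1/4} \<and> measure lebesgue E = \<epsilon> / 2}"
  have k: "\<epsilon>^2 / 2 > 0" using assms by simp
  have "ereal (\<epsilon>^2 / 2) * (INF E \<in> ?SE. supnorm (conv (nif_of E) (nif_of E)))
      = (INF E \<in> ?SE. ereal (\<epsilon>^2 / 2) * supnorm (conv (nif_of E) (nif_of E)))"
    by (rule ereal_cmult_INF[OF k])
  also have "\<dots> = (INF E \<in> ?SE. ereal (2 * MM E))"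
  proof (rule INF_cong[OF refl])
    fix E assume E: "E \<in> ?SE"
    then have Es: "E \<in> sets lebesgue" "E \<subseteq> {-1/4..1/4}" "measure lebesgue E > 0" using assms by auto
    have "ereal (\<epsilon>^2 / 2) * supnorm (conv (nif_of E) (nif_of E)) = ereal (\<epsilon>^2 / 2 * (MM E / (\<epsilon>/2)^2))"
    proof -
      have mE: "measure lebesgue E = \<epsilon>/2" using E by simp
      show ?thesis using supnorm_nif[OF Es, unfolded mE] by simp
    qed
    also have "\<epsilon>^2 / 2 * (MM E / (\<epsilon>/2)^2) = 2 * MM E" using assms by (simp add: field_simps power2_eq_square)
    finally show "ereal (\<epsilon>^2 / 2) * supnorm (conv (nif_of E) (nif_of E)) = ereal (2 * MM E)" .
  qed
  also have "\<dots> = ereal (Inf ((\<lambda>E. 2 * MM E) ` ?SE))"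
  proof -
    have ne: "{-1/4 .. -1/4 + \<epsilon>/2} \<in> ?SE" using assms by auto
    have bdd: "bdd_below ((\<lambda>E. 2 * MM E) ` ?SE)"
    proof (rule bdd_belowI[of _ 0])
      fix y assume "y \<in> (\<lambda>E. 2 * MM E) ` ?SE"
      then obtain E where "y = 2 * MM E" "E \<in> ?SE" by blast
      then show "0 \<le> y" using MM_nonneg[OF lm_bounded[of E "-1/4" "1/4"]] by auto
    qed
    have ne2: "(\<lambda>E. 2 * MM E) ` ?SE \<noteq> {}" using ne by blast
    have "ereal (Inf ((\<lambda>E. 2 * MM E) ` ?SE)) = (INF E \<in> ?SE. ereal (2 * MM E))"
      using ereal_Inf'[OF bdd ne2] by (simp only: image_comp o_def)
    then show ?thesis by simp
  qed
  also have "\<dots> = ereal (Delta \<epsilon>)" using Delta_eq[OF assms] by simp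
  finally show "ereal (\<epsilon>^2 / 2) * (INF E \<in> ?SE. supnorm (conv (nif_of E) (nif_of E))) = ereal (Delta \<epsilon>)" .
qed

end
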